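(* Consider an instance of restricted assignment with interval restrictions in which every job has a nonempty eligible interval, with machines identified with $\{0,\dots,m-1\}$ in their order and $\mathcal{M}(j)=\{\ell(j),\dots,r(j)\}$. Let $\mathrm{OPT}$ be the optimal makespan and let $$L=\max\Big\{\max_{j\in\mathcal{J}}p_j,\ \max_{0\le \ell\le r\le m-1}\frac{p(\mathcal{J}(\ell,r))}{r-\ell+1}\Big\},$$ where $\mathcal{J}(\ell,r)=\{j\in\mathcal{J}: \mathcal{M}(j)\subseteq\{\ell,\dots,r\}\}$ and $p(J)=\sum_{j\in J}p_j$. Consider the least flexible first heuristic: starting with machine $i^*=0$, repeatedly do the following: let $J$ be the set of not yet placed jobs eligible on $i^*$; if the load currently placed on $i^*$ is at most $L$ and $J\neq\emptyset$, place on $i^*$ a job $j\in J$ with minimal $r(j)$ and consider $i^*$ again; otherwise move to the next machine $i^*+1$, or stop if there is none. Then this heuristic places every job, and every machine receives a load of at most $L+\max_{j\in\mathcal{J}}p_j\le 2\,\mathrm{OPT}$.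
   Context: Restricted assignment with interval restrictions: jobs $\mathcal{J}$ with sizes $p_j\ge0$, machines $\{0,\dots,m-1\}$ in a fixed order, each job $j$ eligible exactly on the consecutive machines $\{\ell(j),\dots,r(j)\}$; a schedule assigns each job to an eligible machine, the load of a machine is the total size of jobs assigned to it, and the makespan is the maximum load; $\mathrm{OPT}$ is the minimum makespan over all schedules. *)

theory Defs
  imports Complex_Main
begin

definition jobs_in :: "'j set \<Rightarrow> ('j \<Rightarrow> nat) \<Rightarrow> ('j \<Rightarrow> nat) \<Rightarrow> nat \<Rightarrow> nat \<Rightarrow> 'j set" where
  "jobs_in J l r a b = {j \<in> J. {l j..r j} \<subseteq> {a..b}}"

text \<open>Maximum job size (0 for an empty job set; sizes are nonnegative).\<close>
definition pmax :: "'j set \<Rightarrow> ('j \<Rightarrow> real) \<Rightarrow> real" where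
  "pmax J p = Max (insert 0 (p ` J))"

definition lbound :: "'j set \<Rightarrow> ('j \<Rightarrow> real) \<Rightarrow> ('j \<Rightarrow> nat) \<Rightarrow> ('j \<Rightarrow> nat) \<Rightarrow> nat \<Rightarrow> real" where
  "lbound J p l r m = max (pmax J p)
     (Max {sum p (jobs_in J l r a b) / real (b - a + 1) | a b. a \<le> b \<and> b \<le> m - 1})"

definition feasible :: "'j set \<Rightarrow> ('j \<Rightarrow> nat) \<Rightarrow> ('j \<Rightarrow> nat) \<Rightarrow> ('j \<Rightarrow> nat) \<Rightarrow> bool" where
  "feasible J l r \<sigma> \<longleftrightarrow> (\<forall>j\<in>J. l j \<le> \<sigma> j \<and> \<sigma> j \<le> r j)"

definition makespan :: "'j set \<Rightarrow> ('j \<Rightarrow> real) \<Rightarrow> nat \<Rightarrow> ('j \<Rightarrow> nat) \<Rightarrow> real" where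
  "makespan J p m \<sigma> = Max ((\<lambda>i. sum p {j \<in> J. \<sigma> j = i}) ` {..<m})"

definition OPT :: "'j set \<Rightarrow> ('j \<Rightarrow> real) \<Rightarrow> ('j \<Rightarrow> nat) \<Rightarrow> ('j \<Rightarrow> nat) \<Rightarrow> nat \<Rightarrow> real" where
  "OPT J p l r m = Inf (makespan J p m ` {\<sigma>. feasible J l r \<sigma>})"

text \<open>Heuristic states: (current machine, partial assignment).\<close>
definition avail :: "'j set \<Rightarrow> ('j \<Rightarrow> nat) \<Rightarrow> ('j \<Rightarrow> nat) \<Rightarrow> ('j \<Rightarrow> nat option) \<Rightarrow> nat \<Rightarrow> 'j set" where
  "avail J l r A i = {j \<in> J. A j = None \<and> l j \<le> i \<and> i \<le> r j}"

definition cur_load :: "'j set \<Rightarrow> ('j \<Rightarrow> real) \<Rightarrow> ('j \<Rightarrow> nat option) \<Rightarrow> nat \<Rightarrow> real" where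
  "cur_load J p A i = sum p {j \<in> J. A j = Some i}"

inductive lff_step :: "'j set \<Rightarrow> ('j \<Rightarrow> real) \<Rightarrow> ('j \<Rightarrow> nat) \<Rightarrow> ('j \<Rightarrow> nat) \<Rightarrow> nat \<Rightarrow> real
    \<Rightarrow> nat \<times> ('j \<Rightarrow> nat option) \<Rightarrow> nat \<times> ('j \<Rightarrow> nat option) \<Rightarrow> bool"
  for J p l r m L where
  place: "\<lbrakk> i < m; cur_load J p A i \<le> L; j \<in> avail J l r A i;
            \<forall>k \<in> avail J l r A i. r j \<le> r k \<rbrakk>
          \<Longrightarrow> lff_step J p l r m L (i, A) (i, A(j := Some i))"
| advance: "\<lbrakk> i < m; \<not> (cur_load J p A i \<le> L \<and> avail J l r A i \<noteq> {}) \<rbrakk>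
          \<Longrightarrow> lff_step J p l r m L (i, A) (Suc i, A)"

end

theory Submission
  imports Defs
begin


lemma sum_group':
  assumes "finite J" "finite S"
  shows "sum p {j\<in>J. g j \<in> S} = (\<Sum>i\<in>S. sum p {j\<in>J. g j = i})"
proof -
  have "(\<Sum>i\<in>S. sum p {x. x \<in> {j\<in>J. g j \<in> S} \<and> g x = i}) = sum p {j\<in>J. g j \<in> S}"
    by (rule sum.group) (use assms in auto)
  moreover have "\<And>i. i \<in> S \<Longrightarrow> {x. x \<in> {j\<in>J. g j \<in> S} \<and> g x = i} = {j\<in>J. g j = i}"
    by auto
  ultimately show ?thesis by (metis (no_types, lifting) sum.cong)
qed

lemma avg_finite:
  "finite {sum p (jobs_in J l r a b) / real (b - a + 1) | a b. a \<le> b \<and> b \<le> m - 1}"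
proof -
  have "{sum p (jobs_in J l r a b) / real (b - a + 1) | a b. a \<le> b \<and> b \<le> m - 1}
     \<subseteq> (\<lambda>(a,b). sum p (jobs_in J l r a b) / real (b - a + 1)) ` ({..m-1} \<times> {..m-1})"
    by auto
  then show ?thesis by (rule finite_subset) auto
qed

lemma lb_avg: "sum p (jobs_in J l r a b) / real (b - a + 1) \<le> lbound J p l r m" if "a \<le> b" "b \<le> m - 1"
proof -
  have "sum p (jobs_in J l r a b) / real (b - a + 1) \<in> {sum p (jobs_in J l r a b) / real (b - a + 1) | a b. a \<le> b \<and> b \<le> m - 1}"
    using that by blast
  from Max_ge[OF avg_finite this] show ?thesis unfolding lbound_def by simp
qed

lemma lb_pmax: "pmax J p \<le> lbound J p l r m"
  unfolding lbound_def by simp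

lemma ms_ge_lb:
  assumes fin: "finite J" and m: "m > 0" and nn: "\<forall>j\<in>J. p j \<ge> 0"
    and iv: "\<forall>j\<in>J. l j \<le> r j \<and> r j < m" and fe: "feasible J l r \<sigma>"
  shows "lbound J p l r m \<le> makespan J p m \<sigma>"
proof -
  let ?ld = "\<lambda>i. sum p {j \<in> J. \<sigma> j = i}"
  have ldle: "i < m \<Longrightarrow> ?ld i \<le> makespan J p m \<sigma>" for i
    unfolding makespan_def by (rule Max_ge) auto
  have ld0: "0 \<le> ?ld i" for i using nn by (intro sum_nonneg) auto
  have sig: "j \<in> J \<Longrightarrow> l j \<le> \<sigma> j \<and> \<sigma> j \<le> r j" for j using fe unfolding feasible_def by auto
  have "pmax J p \<le> makespan J p m \<sigma>"
  proof -
    have "0 \<le> makespan J p m \<sigma>" using ldle[OF m] ld0[of 0] by linarith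
    moreover have "p j \<le> makespan J p m \<sigma>" if j: "j \<in> J" for j
    proof -
      have "p j \<le> ?ld (\<sigma> j)" using j nn fin by (intro member_le_sum) auto
      moreover have "\<sigma> j < m" using sig[OF j] iv j by force
      ultimately show ?thesis using ldle[of "\<sigma> j"] by linarith
    qed
    ultimately show ?thesis using fin unfolding pmax_def by (subst Max_le_iff) auto
  qed
  moreover have "Max {sum p (jobs_in J l r a b) / real (b - a + 1) | a b. a \<le> b \<and> b \<le> m - 1}
      \<le> makespan J p m \<sigma>"
  proof (subst Max_le_iff[OF avg_finite], blast, safe)
    fix a b assume ab: "a \<le> b" "b \<le> m - 1"
    have "sum p (jobs_in J l r a b) \<le> sum p {j\<in>J. \<sigma> j \<in> {a..b}}"
    proof (rule sum_mono2)
      show "finite {j\<in>J. \<sigma> j \<in> {a..b}}" using fin by auto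
      show "jobs_in J l r a b \<subseteq> {j\<in>J. \<sigma> j \<in> {a..b}}"
      proof
        fix k assume "k \<in> jobs_in J l r a b"
        then have k: "k \<in> J" "{l k..r k} \<subseteq> {a..b}" unfolding jobs_in_def by auto
        then show "k \<in> {j\<in>J. \<sigma> j \<in> {a..b}}" using sig[OF k(1)] by auto
      qed
      show "\<And>x. x \<in> {j\<in>J. \<sigma> j \<in> {a..b}} - jobs_in J l r a b \<Longrightarrow> 0 \<le> p x" using nn by auto
    qed
    also have "\<dots> = (\<Sum>i\<in>{a..b}. ?ld i)" by (rule sum_group') (use fin in auto)
    also have "\<dots> \<le> (\<Sum>i\<in>{a..b}. makespan J p m \<sigma>)"
      by (rule sum_mono, rule ldle) (use ab m in auto)
    also have "\<dots> = real (b - a + 1) * makespan J p m \<sigma>" using ab by simp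
    finally show "sum p (jobs_in J l r a b) / real (b - a + 1) \<le> makespan J p m \<sigma>"
      by (simp add: pos_divide_le_eq mult.commute)
  qed
  ultimately show ?thesis unfolding lbound_def by simp
qed

lemma opt_ge_lb:
  assumes fin: "finite J" and m: "m > 0" and nn: "\<forall>j\<in>J. p j \<ge> 0"
    and iv: "\<forall>j\<in>J. l j \<le> r j \<and> r j < m"
  shows "lbound J p l r m \<le> OPT J p l r m"
  unfolding OPT_def
proof (rule cInf_greatest)
  have "feasible J l r l" using iv unfolding feasible_def by auto
  then show "makespan J p m ` {\<sigma>. feasible J l r \<sigma>} \<noteq> {}" by auto
  show "\<And>x. x \<in> makespan J p m ` {\<sigma>. feasible J l r \<sigma>} \<Longrightarrow> lbound J p l r m \<le> x"
    using ms_ge_lb[OF assms] by auto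
qed



definition Qp :: "'j set \<Rightarrow> ('j \<Rightarrow> real) \<Rightarrow> ('j \<Rightarrow> nat) \<Rightarrow> ('j \<Rightarrow> nat) \<Rightarrow> real \<Rightarrow> ('j \<Rightarrow> nat option) \<Rightarrow> nat \<Rightarrow> nat \<Rightarrow> bool" where
  "Qp J p l r L A t c \<longleftrightarrow> (\<forall>k\<in>J. l k \<le> t \<and> t \<le> r k \<and> r k \<le> c \<longrightarrow> (\<exists>i'\<le>t. A k = Some i'))
     \<or> (cur_load J p A t > L \<and> (\<forall>k\<in>J. A k = Some t \<longrightarrow> r k \<le> c))"

definition Rp :: "'j set \<Rightarrow> ('j \<Rightarrow> nat) \<Rightarrow> ('j \<Rightarrow> nat) \<Rightarrow> ('j \<Rightarrow> nat option) \<Rightarrow> nat \<Rightarrow> nat \<Rightarrow> bool" where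
  "Rp J l r A t c \<longleftrightarrow> (\<forall>k\<in>J. l k \<le> t \<and> t \<le> r k \<and> r k \<le> c \<longrightarrow> (\<exists>i'\<le>t. A k = Some i'))
     \<or> (\<forall>k\<in>J. A k = Some t \<longrightarrow> r k \<le> c)"

definition Inv where
  "Inv J p l r m L s \<longleftrightarrow> (case s of (i, A) \<Rightarrow> i \<le> m
     \<and> (\<forall>k i'. A k = Some i' \<longrightarrow> k \<in> J \<and> l k \<le> i' \<and> i' \<le> r k \<and> i' \<le> i)
     \<and> (\<forall>i'. cur_load J p A i' \<le> L + pmax J p)
     \<and> (\<forall>t<i. \<forall>c\<ge>t. Qp J p l r L A t c)
     \<and> (\<forall>c\<ge>i. Rp J l r A i c))"

lemma pmax_ge: "finite J \<Longrightarrow> j \<in> J \<Longrightarrow> p j \<le> pmax J p"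
  unfolding pmax_def by (simp add: Max_ge)

lemma pmax_nonneg: "finite J \<Longrightarrow> 0 \<le> pmax J p"
  unfolding pmax_def by (simp add: Max_ge)

lemma Inv_init: "finite J \<Longrightarrow> 0 \<le> L \<Longrightarrow> Inv J p l r m L (0, \<lambda>_. None)"
  unfolding Inv_def Rp_def cur_load_def using pmax_nonneg[of J p] by auto

lemma Inv_step:
  assumes fin: "finite J" and st: "lff_step J p l r m L s s'" and inv: "Inv J p l r m L s"
  shows "Inv J p l r m L s'"
  using st
proof cases
  case (place i A j)
  let ?A = "A(j := Some i)"
  from place have jJ: "j \<in> J" and jN: "A j = None" and jl: "l j \<le> i" "i \<le> r j"
    unfolding avail_def by auto
  from inv place have i1: "i \<le> m"
    and i2: "\<forall>k i'. A k = Some i' \<longrightarrow> k \<in> J \<and> l k \<le> i' \<and> i' \<le> r k \<and> i' \<le> i"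
    and i3: "\<forall>i'. cur_load J p A i' \<le> L + pmax J p"
    and i4: "\<forall>t<i. \<forall>c\<ge>t. Qp J p l r L A t c"
    and i5: "\<forall>c\<ge>i. Rp J l r A i c" unfolding Inv_def by auto
  have mono: "A k = Some i' \<Longrightarrow> ?A k = Some i'" for k i' using jN by auto
  have same: "t \<noteq> i \<Longrightarrow> {k\<in>J. ?A k = Some t} = {k\<in>J. A k = Some t}" for t using jN by auto
  have sameL: "t \<noteq> i \<Longrightarrow> cur_load J p ?A t = cur_load J p A t" for t
    unfolding cur_load_def using same by simp
  have ins: "{k\<in>J. ?A k = Some i} = insert j {k\<in>J. A k = Some i}" using jJ by auto
  have "cur_load J p ?A i = p j + cur_load J p A i"
    unfolding cur_load_def ins using fin jN by (subst sum.insert) auto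
  also have "\<dots> \<le> L + pmax J p" using place(4) pmax_ge[OF fin jJ, of p] by linarith
  finally have loadi: "cur_load J p ?A i \<le> L + pmax J p" .
  have n2: "\<forall>k i'. ?A k = Some i' \<longrightarrow> k \<in> J \<and> l k \<le> i' \<and> i' \<le> r k \<and> i' \<le> i"
    using i2 jJ jl by auto
  have n3: "\<forall>i'. cur_load J p ?A i' \<le> L + pmax J p"
    using loadi sameL i3 by metis
  have n4: "\<forall>t<i. \<forall>c\<ge>t. Qp J p l r L ?A t c"
  proof (intro allI impI)
    fix t c assume t: "t < i" "t \<le> c"
    then have q: "Qp J p l r L A t c" using i4 by auto
    have "\<forall>k\<in>J. A k = Some t \<longleftrightarrow> ?A k = Some t" using t jN by auto
    moreover have "cur_load J p ?A t = cur_load J p A t" using sameL t by simp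
    ultimately show "Qp J p l r L ?A t c" using q mono unfolding Qp_def by metis
  qed
  have n5: "\<forall>c\<ge>i. Rp J l r ?A i c"
  proof (intro allI impI)
    fix c assume c: "i \<le> c"
    show "Rp J l r ?A i c"
    proof (cases "r j \<le> c")
      case True
      then show ?thesis using i5 c mono unfolding Rp_def by (smt (verit) fun_upd_apply)
    next
      case False
      have "\<forall>k\<in>J. l k \<le> i \<and> i \<le> r k \<and> r k \<le> c \<longrightarrow> (\<exists>i'\<le>i. ?A k = Some i')"
      proof (intro ballI impI)
        fix k assume k: "k \<in> J" "l k \<le> i \<and> i \<le> r k \<and> r k \<le> c"
        have "k \<notin> avail J l r A i" using place(6) k False by force
        then obtain i' where "A k = Some i'" using k unfolding avail_def by auto
        then show "\<exists>i'\<le>i. ?A k = Some i'" using i2 mono by blast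
      qed
      then show ?thesis unfolding Rp_def by blast
    qed
  qed
  show ?thesis using place i1 n2 n3 n4 n5 unfolding Inv_def by simp
next
  case (advance i A)
  from inv advance have i1: "i \<le> m"
    and i2: "\<forall>k i'. A k = Some i' \<longrightarrow> k \<in> J \<and> l k \<le> i' \<and> i' \<le> r k \<and> i' \<le> i"
    and i3: "\<forall>i'. cur_load J p A i' \<le> L + pmax J p"
    and i4: "\<forall>t<i. \<forall>c\<ge>t. Qp J p l r L A t c"
    and i5: "\<forall>c\<ge>i. Rp J l r A i c" unfolding Inv_def by auto
  have n4: "\<forall>t<Suc i. \<forall>c\<ge>t. Qp J p l r L A t c"
  proof (intro allI impI)
    fix t c assume t: "t < Suc i" "t \<le> c"
    show "Qp J p l r L A t c"
    proof (cases "t < i")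
      case True then show ?thesis using i4 t by auto
    next
      case False
      then have ti: "t = i" using t by auto
      show ?thesis
      proof (cases "cur_load J p A i \<le> L")
        case True
        then have "avail J l r A i = {}" using advance by auto
        then have "\<forall>k\<in>J. l k \<le> i \<and> i \<le> r k \<and> r k \<le> c \<longrightarrow> (\<exists>i'\<le>i. A k = Some i')"
          using i2 unfolding avail_def by fastforce
        then show ?thesis unfolding Qp_def ti by blast
      next
        case False
        then show ?thesis using i5 t ti unfolding Qp_def Rp_def by auto
      qed
    qed
  qed
  have n5: "\<forall>c\<ge>Suc i. Rp J l r A (Suc i) c"
    using i2 unfolding Rp_def by force
  have n2: "\<forall>k i'. A k = Some i' \<longrightarrow> k \<in> J \<and> l k \<le> i' \<and> i' \<le> r k \<and> i' \<le> Suc i"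
    using i2 le_SucI by blast
  show ?thesis using advance i1 n2 i3 n4 n5 unfolding Inv_def by auto
qed

lemma Inv_star:
  assumes fin: "finite J" and L: "0 \<le> L"
    and st: "(lff_step J p l r m L)\<^sup>*\<^sup>* (0, \<lambda>_. None) s"
  shows "Inv J p l r m L s"
  using st
proof (induction rule: rtranclp_induct)
  case base then show ?case using Inv_init[OF fin L] by simp
next
  case (step y z) then show ?case using Inv_step[OF fin] by blast
qed



lemma reach:
  assumes fin: "finite J"
  shows "i \<le> m \<Longrightarrow> \<exists>A'. (lff_step J p l r m L)\<^sup>*\<^sup>* (i, A) (m, A')"
proof (induction "(m - i) + card {k\<in>J. A k = None}" arbitrary: i A rule: less_induct)
  case less
  show ?case
  proof (cases "i = m")
    case True then show ?thesis by blast
  next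
    case False
    then have im: "i < m" using less by auto
    show ?thesis
    proof (cases "cur_load J p A i \<le> L \<and> avail J l r A i \<noteq> {}")
      case True
      let ?S = "avail J l r A i"
      have fS: "finite ?S" using fin unfolding avail_def by auto
      have "Min (r ` ?S) \<in> r ` ?S" using fS True by (intro Min_in) auto
      then obtain j where j: "j \<in> ?S" "r j = Min (r ` ?S)" by auto
      have jmin: "\<forall>k\<in>?S. r j \<le> r k" using j fS by auto
      have st: "lff_step J p l r m L (i, A) (i, A(j := Some i))"
        by (rule lff_step.place) (use im True j jmin in auto)
      have jJ: "j \<in> J" "A j = None" using j(1) unfolding avail_def by auto
      have eq: "{k\<in>J. (A(j := Some i)) k = None} = {k\<in>J. A k = None} - {j}" by auto
      have "card ({k\<in>J. A k = None} - {j}) < card {k\<in>J. A k = None}"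
        using jJ fin by (intro card_Diff1_less) auto
      then have "card {k\<in>J. (A(j := Some i)) k = None} < card {k\<in>J. A k = None}"
        unfolding eq .
      then obtain A' where "(lff_step J p l r m L)\<^sup>*\<^sup>* (i, A(j := Some i)) (m, A')"
        using less(1)[of i "A(j := Some i)"] less(2) by fastforce
      then show ?thesis using st by (meson converse_rtranclp_into_rtranclp)
    next
      case False
      have st: "lff_step J p l r m L (i, A) (Suc i, A)"
        by (rule lff_step.advance) (use im False in auto)
      obtain A' where "(lff_step J p l r m L)\<^sup>*\<^sup>* (Suc i, A) (m, A')"
        using less(1)[of "Suc i" A] im by fastforce
      then show ?thesis using st by (meson converse_rtranclp_into_rtranclp)
    qed
  qed
qed


lemma all_assigned:
  fixes J :: "'j set" and p :: "'j \<Rightarrow> real" and l r :: "'j \<Rightarrow> nat" and m :: nat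
  assumes fin: "finite J" and m: "m > 0" and nn: "\<forall>j\<in>J. p j \<ge> 0"
    and iv: "\<forall>j\<in>J. l j \<le> r j \<and> r j < m"
    and inv: "Inv J p l r m (lbound J p l r m) (m, A)" and jJ: "j \<in> J"
  shows "A j \<noteq> None"
proof
  assume jN: "A j = None"
  let ?L = "lbound J p l r m"
  define c where "c = r j"
  have cm: "c < m" using iv jJ c_def by auto
  from inv have
        i2: "\<forall>k i'. A k = Some i' \<longrightarrow> k \<in> J \<and> l k \<le> i' \<and> i' \<le> r k \<and> i' \<le> m"
    and i4: "\<forall>t<m. \<forall>c\<ge>t. Qp J p l r ?L A t c" unfolding Inv_def by auto
  define good where "good t \<longleftrightarrow> cur_load J p A t > ?L \<and> (\<forall>k\<in>J. A k = Some t \<longrightarrow> r k \<le> c)" for t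
  have Q: "t \<le> c \<Longrightarrow> good t \<or> (\<forall>k\<in>J. l k \<le> t \<and> t \<le> r k \<and> r k \<le> c \<longrightarrow> (\<exists>i'\<le>t. A k = Some i'))" for t
  proof -
    assume "t \<le> c"
    then have "Qp J p l r ?L A t c" using i4 cm by auto
    then show ?thesis unfolding Qp_def good_def by (elim disjE) simp_all
  qed
  have gc: "good c"
  proof -
    have "\<not> (\<exists>i'\<le>c. A j = Some i')" using jN by auto
    then show ?thesis using Q[of c] jJ iv c_def by auto
  qed
  define a where "a = (LEAST a. \<forall>t\<in>{a..c}. good t)"
  have ex: "\<forall>t\<in>{c..c}. good t" using gc by auto
  have ac: "a \<le> c" unfolding a_def by (rule Least_le) (rule ex)
  have allg: "\<forall>t\<in>{a..c}. good t" unfolding a_def by (rule LeastI) (rule ex)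
  have Hb: "\<forall>k\<in>J. l k < a \<and> a - 1 \<le> r k \<and> r k \<le> c \<longrightarrow> (\<exists>i'\<le>a-1. A k = Some i')" if a0: "a > 0"
  proof -
    have "\<not> (\<forall>t\<in>{a-1..c}. good t)" unfolding a_def
      by (rule not_less_Least) (use a0 a_def in simp)
    then obtain t where t: "a - 1 \<le> t" "t \<le> c" "\<not> good t" by auto
    then have "t = a - 1" using allg by (cases "a \<le> t") auto
    then have "\<not> good (a-1)" using t by simp
    then have "\<forall>k\<in>J. l k \<le> a-1 \<and> a-1 \<le> r k \<and> r k \<le> c \<longrightarrow> (\<exists>i'\<le>a-1. A k = Some i')"
      using Q[of "a-1"] ac by auto
    then show ?thesis using a0 by auto
  qed
  define S where "S = {k\<in>J. A k \<in> Some ` {a..c}}"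
  have jS: "j \<notin> S" using jN S_def by auto
  have sub: "insert j S \<subseteq> jobs_in J l r a c"
  proof
    fix k assume k: "k \<in> insert j S"
    show "k \<in> jobs_in J l r a c"
    proof (cases "k = j")
      case True
      have "a \<le> l j"
      proof (rule ccontr)
        assume "\<not> a \<le> l j"
        then have "l j < a" "a > 0" by auto
        moreover have "a - 1 \<le> r j" "r j \<le> c" using ac c_def by auto
        ultimately have "\<exists>i'\<le>a-1. A j = Some i'" using Hb jJ by blast
        then obtain i' where "A j = Some i'" by blast
        then show False using jN by simp
      qed
      then show ?thesis using True jJ c_def unfolding jobs_in_def by auto
    next
      case False
      then obtain i where kJ: "k \<in> J" and Ak: "A k = Some i" and ia: "a \<le> i" "i \<le> c"
        using k S_def by auto
      have rk: "r k \<le> c" using allg ia kJ Ak unfolding good_def by auto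
      have lk: "l k \<le> i" "i \<le> r k" using i2 Ak by auto
      have "a \<le> l k"
      proof (rule ccontr)
        assume "\<not> a \<le> l k"
        then have "l k < a" "a > 0" by auto
        moreover have "a - 1 \<le> r k" using lk ia by auto
        ultimately have "\<exists>i'\<le>a-1. A k = Some i'" using Hb kJ rk by blast
        then obtain i' where "i' \<le> a - 1" "A k = Some i'" by blast
        then show False using Ak ia \<open>a > 0\<close> by auto
      qed
      then show ?thesis using kJ rk unfolding jobs_in_def by auto
    qed
  qed
  have "sum p S = (\<Sum>i\<in>Some ` {a..c}. sum p {k\<in>J. A k = i})"
    unfolding S_def by (rule sum_group') (use fin in auto)
  also have "\<dots> = (\<Sum>i\<in>{a..c}. cur_load J p A i)"
    unfolding cur_load_def by (subst sum.reindex) auto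
  finally have sS: "sum p S = (\<Sum>i\<in>{a..c}. cur_load J p A i)" .
  have "(\<Sum>i\<in>{a..c}. ?L) < (\<Sum>i\<in>{a..c}. cur_load J p A i)"
    by (rule sum_strict_mono) (use ac allg good_def in auto)
  also have "\<dots> = sum p S" using sS by simp
  also have "\<dots> \<le> p j + sum p S" using nn jJ by simp
  also have "\<dots> = sum p (insert j S)" using jS fin S_def by (subst sum.insert) auto
  also have "\<dots> \<le> sum p (jobs_in J l r a c)"
    by (rule sum_mono2) (use sub fin nn in \<open>auto simp: jobs_in_def\<close>)
  finally have lt: "real (c - a + 1) * ?L < sum p (jobs_in J l r a c)" using ac
    by (simp add: Suc_diff_le)
  have "sum p (jobs_in J l r a c) / real (c - a + 1) \<le> ?L"
    by (rule lb_avg) (use ac cm in auto)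
  then have "sum p (jobs_in J l r a c) \<le> real (c - a + 1) * ?L"
    by (simp add: pos_divide_le_eq mult.commute)
  then show False using lt by linarith
qed

theorem lemma2:
  fixes J :: "'j set" and p :: "'j \<Rightarrow> real" and l r :: "'j \<Rightarrow> nat" and m :: nat
  assumes "finite J" and "m > 0"
    and "\<forall>j\<in>J. p j \<ge> 0"
    and "\<forall>j\<in>J. l j \<le> r j \<and> r j < m"
  shows "(\<exists>A. (lff_step J p l r m (lbound J p l r m))\<^sup>*\<^sup>* (0, \<lambda>_. None) (m, A))
       \<and> (\<forall>A. (lff_step J p l r m (lbound J p l r m))\<^sup>*\<^sup>* (0, \<lambda>_. None) (m, A) \<longrightarrow>
              (\<forall>j\<in>J. A j \<noteq> None) \<and>
              (\<forall>i<m. cur_load J p A i \<le> lbound J p l r m + pmax J p))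
       \<and> lbound J p l r m + pmax J p \<le> 2 * OPT J p l r m"
proof -
  have E: "\<exists>A. (lff_step J p l r m (lbound J p l r m))\<^sup>*\<^sup>* (0, \<lambda>_. None) (m, A)"
    using reach[OF assms(1)] by blast
  have L0: "0 \<le> lbound J p l r m" using pmax_nonneg[OF assms(1), of p] lb_pmax[of J p l r m] by linarith
  have F: "(\<forall>j\<in>J. A j \<noteq> None) \<and> (\<forall>i<m. cur_load J p A i \<le> lbound J p l r m + pmax J p)"
    if st: "(lff_step J p l r m (lbound J p l r m))\<^sup>*\<^sup>* (0, \<lambda>_. None) (m, A)" for A
  proof -
    have inv: "Inv J p l r m (lbound J p l r m) (m, A)" by (rule Inv_star[OF assms(1) L0 st])
    have "\<forall>i'. cur_load J p A i' \<le> lbound J p l r m + pmax J p" using inv unfolding Inv_def by simp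
    then show ?thesis using all_assigned[OF assms inv] by blast
  qed
  have O: "lbound J p l r m + pmax J p \<le> 2 * OPT J p l r m"
    using opt_ge_lb[OF assms] lb_pmax[of J p l r m] by linarith
  show ?thesis using E F O by blast
qed

end
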